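(* Let $\mathbb K$ be an infinite field, $\mathcal N$ a vector space over $\mathbb K$, and $f:(\mathbb K^d)_{\mathrm{nc}}\to\mathcal N_{\mathrm{nc}}$ a nc function. Assume that for each $n$, $f(X_1,\dots,X_d)$ is a polynomial function of the $dn^2$ commuting variables $(X_i)_{jk}$ ($i=1,\dots,d$; $j,k=1,\dots,n$) with values in $\mathcal N^{n\times n}$, and that the degrees of these polynomial functions are bounded uniformly in $n$. Then $f$ is a nc polynomial with coefficients in $\mathcal N$: there exist $L\in\mathbb N$ and $p_w\in\mathcal N$ ($w\in\mathcal G_d$, $|w|\le L$) such that $f(X)=\sum_{|w|\le L}X^wp_w$ for all $n$ and all $X\in(\mathbb K^{n\times n})^d$.
   Context: $n\times n$ matrices over $\mathbb K^d$ are identified with $d$-tuples $X=(X_1,\dots,X_d)$ of $n\times n$ matrices over $\mathbb K$; $(\mathbb K^d)_{\mathrm{nc}}=\coprod_n(\mathbb K^{n\times n})^d$, $\mathcal N_{\mathrm{nc}}=\coprod_n\mathcal N^{n\times n}$. A nc function $f$ satisfies $f((\mathbb K^{n\times n})^d)\subseteq\mathcal N^{n\times n}$, $f(X\oplus Y)=f(X)\oplus f(Y)$ (direct sums taken componentwise, $X\oplus Y=\begin{bmatrix}X&0\\0&Y\end{bmatrix}$), and $f(SXS^{-1})=Sf(X)S^{-1}$ for invertible $S\in\mathbb K^{n\times n}$ (acting componentwise). $\mathcal G_d$ is the free monoid on letters $g_1,\dots,g_d$; for $w=g_{i_1}\cdots g_{i_\ell}$, $|w|=\ell$ and $X^w=X_{i_1}\cdots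 X_{i_\ell}$ ($X^\emptyset=I_n$); $X^wp_w\in\mathcal N^{n\times n}$ is the matrix with entries $(X^w)_{jk}p_w$. *)

theory Defs
  imports Main "HOL.Vector_Spaces"
begin

text \<open>An n x n matrix over a type 'a is a function nat => nat => 'a,
  of which only the entries with indices < n are relevant; a d-tuple of n x n
  matrices over K is a function X :: nat => nat => nat => 'k, X i j k being the
  (j,k) entry of the i-th matrix (i < d).  Canonical representatives are zero
  outside the index range.  A nc function is given by its levels
  f :: nat => (nat => nat => nat => 'k) => (nat => nat => 'v), f n being the
  map on d-tuples of n x n matrices.\<close>

definition tup_carrier :: "nat \<Rightarrow> nat \<Rightarrow> (nat \<Rightarrow> nat \<Rightarrow> nat \<Rightarrow> 'k::zero) set" where
  "tup_carrier d n = {X. \<forall>i j k. (d \<le> i \<or> n \<le> j \<or> n \<le> k) \<longrightarrow> X i j k = 0}"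

definition mat_carrier :: "nat \<Rightarrow> (nat \<Rightarrow> nat \<Rightarrow> 'k::zero) set" where
  "mat_carrier n = {A. \<forall>j k. (n \<le> j \<or> n \<le> k) \<longrightarrow> A j k = 0}"

definition idm :: "nat \<Rightarrow> nat \<Rightarrow> nat \<Rightarrow> 'k::{zero,one}" where
  "idm n j k = (if j < n \<and> k < n \<and> j = k then 1 else 0)"

definition mmul :: "nat \<Rightarrow> (nat \<Rightarrow> nat \<Rightarrow> 'k::comm_semiring_1) \<Rightarrow> (nat \<Rightarrow> nat \<Rightarrow> 'k) \<Rightarrow> nat \<Rightarrow> nat \<Rightarrow> 'k" where
  "mmul n A B j k = (\<Sum>l<n. A j l * B l k)"

definition dsum :: "nat \<Rightarrow> nat \<Rightarrow> (nat \<Rightarrow> nat \<Rightarrow> 'a::zero) \<Rightarrow> (nat \<Rightarrow> nat \<Rightarrow> 'a) \<Rightarrow> nat \<Rightarrow> nat \<Rightarrow> 'a" where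
  "dsum n m A B j k =
     (if j < n \<and> k < n then A j k
      else if n \<le> j \<and> j < n + m \<and> n \<le> k \<and> k < n + m then B (j - n) (k - n)
      else 0)"

definition tup_dsum :: "nat \<Rightarrow> nat \<Rightarrow> nat \<Rightarrow> (nat \<Rightarrow> nat \<Rightarrow> nat \<Rightarrow> 'a::zero) \<Rightarrow> (nat \<Rightarrow> nat \<Rightarrow> nat \<Rightarrow> 'a) \<Rightarrow> nat \<Rightarrow> nat \<Rightarrow> nat \<Rightarrow> 'a" where
  "tup_dsum d n m X Y i = (if i < d then dsum n m (X i) (Y i) else (\<lambda>_ _. 0))"

definition tup_conj :: "nat \<Rightarrow> nat \<Rightarrow> (nat \<Rightarrow> nat \<Rightarrow> 'k::comm_semiring_1) \<Rightarrow> (nat \<Rightarrow> nat \<Rightarrow> nat \<Rightarrow> 'k) \<Rightarrow> (nat \<Rightarrow> nat \<Rightarrow> 'k) \<Rightarrow> nat \<Rightarrow> nat \<Rightarrow> nat \<Rightarrow> 'k" where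
  "tup_conj d n S X T i = (if i < d then mmul n (mmul n S (X i)) T else (\<lambda>_ _. 0))"

definition vconj :: "('k::comm_semiring_1 \<Rightarrow> 'v \<Rightarrow> 'v) \<Rightarrow> nat \<Rightarrow> (nat \<Rightarrow> nat \<Rightarrow> 'k) \<Rightarrow> (nat \<Rightarrow> nat \<Rightarrow> 'v::comm_monoid_add) \<Rightarrow> (nat \<Rightarrow> nat \<Rightarrow> 'k) \<Rightarrow> nat \<Rightarrow> nat \<Rightarrow> 'v" where
  "vconj scale n S F T j k = (\<Sum>l<n. \<Sum>m<n. scale (S j l * T m k) (F l m))"

definition nc_function ::
  "('k::field \<Rightarrow> 'v \<Rightarrow> 'v) \<Rightarrow> nat \<Rightarrow> (nat \<Rightarrow> (nat \<Rightarrow> nat \<Rightarrow> nat \<Rightarrow> 'k) \<Rightarrow> nat \<Rightarrow> nat \<Rightarrow> 'v::comm_monoid_add) \<Rightarrow> bool" where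
  "nc_function scale d f \<longleftrightarrow>
     (\<forall>n m X Y. X \<in> tup_carrier d n \<longrightarrow> Y \<in> tup_carrier d m \<longrightarrow>
        (\<forall>j k. j < n + m \<longrightarrow> k < n + m \<longrightarrow>
           f (n + m) (tup_dsum d n m X Y) j k = dsum n m (f n X) (f m Y) j k)) \<and>
     (\<forall>n X S T. X \<in> tup_carrier d n \<longrightarrow> S \<in> mat_carrier n \<longrightarrow> T \<in> mat_carrier n \<longrightarrow>
        (\<forall>j k. j < n \<longrightarrow> k < n \<longrightarrow> mmul n S T j k = idm n j k \<and> mmul n T S j k = idm n j k) \<longrightarrow>
        (\<forall>j k. j < n \<longrightarrow> k < n \<longrightarrow>
           f n (tup_conj d n S X T) j k = vconj scale n S (f n X) T j k))"

definition vars :: "nat \<Rightarrow> nat \<Rightarrow> (nat \<times> nat \<times> nat) set" where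
  "vars d n = {(i, j, k). i < d \<and> j < n \<and> k < n}"

definition monomials :: "(nat \<times> nat \<times> nat) set \<Rightarrow> nat \<Rightarrow> (nat \<times> nat \<times> nat \<Rightarrow> nat) set" where
  "monomials V D = {\<alpha>. (\<forall>v. v \<notin> V \<longrightarrow> \<alpha> v = 0) \<and> (\<Sum>v\<in>V. \<alpha> v) \<le> D}"

definition poly_fun_deg ::
  "('k::comm_semiring_1 \<Rightarrow> 'v \<Rightarrow> 'v) \<Rightarrow> nat \<Rightarrow> nat \<Rightarrow> nat \<Rightarrow> ((nat \<Rightarrow> nat \<Rightarrow> nat \<Rightarrow> 'k) \<Rightarrow> 'v::comm_monoid_add) \<Rightarrow> bool" where
  "poly_fun_deg scale d n D g \<longleftrightarrow>
     (\<exists>c :: (nat \<times> nat \<times> nat \<Rightarrow> nat) \<Rightarrow> 'v. \<forall>X \<in> tup_carrier d n.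
        g X = (\<Sum>\<alpha>\<in>monomials (vars d n) D.
                 scale (\<Prod>(i, j, k)\<in>vars d n. X i j k ^ \<alpha> (i, j, k)) (c \<alpha>)))"

text \<open>Words in the free monoid on g_1..g_d: lists of letters < d; X^w as matrix product,
  X^[] = I_n.\<close>
definition words :: "nat \<Rightarrow> nat \<Rightarrow> nat list set" where
  "words d L = {w. length w \<le> L \<and> set w \<subseteq> {..<d}}"

definition word_mat :: "nat \<Rightarrow> (nat \<Rightarrow> nat \<Rightarrow> nat \<Rightarrow> 'k::comm_semiring_1) \<Rightarrow> nat list \<Rightarrow> nat \<Rightarrow> nat \<Rightarrow> 'k" where
  "word_mat n X w = foldr (\<lambda>i M. mmul n (X i) M) w (idm n)"

end

theory Submission
  imports Defs
begin



lemma sum_split: "(\<Sum>a<(n::nat)+m. g a) = (\<Sum>a<n. g a) + (\<Sum>b<m. g (n+b))"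
  by (induction m) (simp_all add: add.assoc)

lemma less_add_cases:
  assumes "(k::nat) < n + m" obtains "k < n" | k' where "k = n + k'" "k' < m"
  using assms by (metis add_diff_inverse_nat add_less_cancel_left)

lemma ite1: "(if P then 1 else 0) * (x::'a::semiring_1) = (if P then x else 0)"
  "x * (if P then 1 else 0) = (if P then x else 0)"
  "- (if P then (y::'b::ab_group_add) else 0) = (if P then - y else 0)" by auto

definition pmat :: "nat \<Rightarrow> nat \<Rightarrow> (nat\<Rightarrow>nat\<Rightarrow>'k) \<Rightarrow> 'k \<Rightarrow> nat \<Rightarrow> nat \<Rightarrow> 'k::comm_ring_1" where
 "pmat n m S s j k = (if j < n+m \<and> k < n+m then (if j = k then 1 else if j < n \<and> n \<le> k then s * S j (k-n) else 0) else 0)"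

lemma pmat_ll: "j < n \<Longrightarrow> k < n \<Longrightarrow> pmat n m S s j k = (if j = k then 1 else 0)"
  and pmat_lr: "j < n \<Longrightarrow> k < m \<Longrightarrow> pmat n m S s j (n+k) = s * S j k"
  and pmat_rl: "j < m \<Longrightarrow> k < n \<Longrightarrow> pmat n m S s (n+j) k = 0"
  and pmat_rr: "j < m \<Longrightarrow> k < m \<Longrightarrow> pmat n m S s (n+j) (n+k) = (if j = k then 1 else 0)"
  by (auto simp: pmat_def)

lemma pmat_inv:
  assumes "j < n+m" "k < n+m"
  shows "mmul (n+m) (pmat n m S s) (pmat n m S (-s)) j k = idm (n+m) j k"
proof -
  consider "j<n" "k<n" | k' where "j<n" "k=n+k'" "k'<m" | j' where "j=n+j'" "j'<m" "k<n"
    | j' k' where "j=n+j'" "j'<m" "k=n+k'" "k'<m"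
    using less_add_cases[OF assms(1)] less_add_cases[OF assms(2)] by metis
  then show ?thesis
    by cases (simp_all add: mmul_def sum_split pmat_ll pmat_lr pmat_rl pmat_rr idm_def ite1)
qed




lemma dsum_ll: "j < n \<Longrightarrow> k < n \<Longrightarrow> dsum n m A B j k = A j k"
  and dsum_lr: "j < n \<Longrightarrow> k < m \<Longrightarrow> dsum n m A B j (n+k) = 0"
  and dsum_rl: "j < m \<Longrightarrow> k < n \<Longrightarrow> dsum n m A B (n+j) k = 0"
  and dsum_rr: "j < m \<Longrightarrow> k < m \<Longrightarrow> dsum n m A B (n+j) (n+k) = B j k"
  by (auto simp: dsum_def)

lemma dsum_out: "\<not> (j < n+m \<and> k < n+m) \<Longrightarrow> dsum n m A B j k = 0"
  by (auto simp: dsum_def)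

lemma pmat_out: "\<not> (j < n+m \<and> k < n+m) \<Longrightarrow> pmat n m S s j k = 0"
  by (auto simp: pmat_def)

lemma cases3: obtains "(j::nat) < n" | j' where "j = n + j'" "j' < m" | "n + m \<le> j"
  by (metis less_add_cases not_le)

lemma tup_dsum_carrier: "tup_dsum d n m X Y \<in> tup_carrier d (n+m)"
  by (auto simp: tup_carrier_def tup_dsum_def dsum_def)

lemma conj_fix:
  fixes X Y :: "nat \<Rightarrow> nat \<Rightarrow> nat \<Rightarrow> 'k::comm_ring_1"
  assumes X: "X \<in> tup_carrier d n" and Y: "Y \<in> tup_carrier d m"
    and HI: "\<And>i j l. i<d \<Longrightarrow> j<n \<Longrightarrow> l<m \<Longrightarrow> (\<Sum>a<n. X i j a * S a l) = (\<Sum>b<m. S j b * Y i b l)"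
  shows "tup_conj d (n+m) (pmat n m S 1) (tup_dsum d n m X Y) (pmat n m S (-1)) = tup_dsum d n m X Y"
proof (intro ext)
  fix i j k
  show "tup_conj d (n+m) (pmat n m S 1) (tup_dsum d n m X Y) (pmat n m S (-1)) i j k = tup_dsum d n m X Y i j k"
  proof (cases "i < d")
    case False thus ?thesis by (simp add: tup_conj_def tup_dsum_def)
  next
    case i: True
    let ?Z = "dsum n m (X i) (Y i)"
    have PM: "mmul (n+m) (pmat n m S 1) ?Z j k =
       (if j < n \<and> k < n then X i j k else if j < n \<and> n \<le> k \<and> k < n+m then (\<Sum>b<m. S j b * Y i b (k-n))
        else if n \<le> j \<and> j < n+m \<and> n \<le> k \<and> k < n+m then Y i (j-n) (k-n) else 0)" for j k
      by (cases rule: cases3[where j=j and n=n and m=m]; cases rule: cases3[where j=k and n=n and m=m])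
         (simp_all add: mmul_def sum_split pmat_ll pmat_lr pmat_rl pmat_rr dsum_ll dsum_lr dsum_rl dsum_rr ite1 dsum_out pmat_out)
    have HX: "\<And>a b. n \<le> a \<or> n \<le> b \<Longrightarrow> X i a b = 0" using X by (auto simp: tup_carrier_def)
    have HY: "\<And>a b. m \<le> a \<or> m \<le> b \<Longrightarrow> Y i a b = 0" using Y by (auto simp: tup_carrier_def)
    have "mmul (n+m) (mmul (n+m) (pmat n m S 1) ?Z) (pmat n m S (-1)) j k = dsum n m (X i) (Y i) j k"
      unfolding mmul_def[of "n+m" "mmul (n+m) (pmat n m S 1) ?Z"] PM
      by (cases rule: cases3[where j=j and n=n and m=m]; cases rule: cases3[where j=k and n=n and m=m])
         (simp_all add: sum_split pmat_ll pmat_lr pmat_rl pmat_rr dsum_ll dsum_lr dsum_rl dsum_rr ite1 dsum_out pmat_out HI i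
           sum_negf)
    then show ?thesis using i by (simp add: tup_conj_def tup_dsum_def)
  qed
qed


locale ncl = module scale for scale :: "'k::field \<Rightarrow> 'v::ab_group_add \<Rightarrow> 'v" +
  fixes d :: nat and f :: "nat \<Rightarrow> (nat \<Rightarrow> nat \<Rightarrow> nat \<Rightarrow> 'k) \<Rightarrow> nat \<Rightarrow> nat \<Rightarrow> 'v"
  assumes ncf: "nc_function scale d f"
begin

lemma sum_if_cond: "(\<Sum>y\<in>B. if P then g y else (0::'a::comm_monoid_add)) = (if P then sum g B else 0)"
  by simp

lemma scale_if: "scale (if P then x else 0) v = (if P then scale x v else 0)"
  by simp

lemma intertw:
  assumes X: "X \<in> tup_carrier d n" and Y: "Y \<in> tup_carrier d m"
    and HI: "\<And>i j l. i<d \<Longrightarrow> j<n \<Longrightarrow> l<m \<Longrightarrow> (\<Sum>a<n. X i j a * S a l) = (\<Sum>b<m. S j b * Y i b l)"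
    and jl: "j < n" "l < m"
  shows "(\<Sum>a<n. scale (S a l) (f n X j a)) = (\<Sum>b<m. scale (S j b) (f m Y b l))"
proof -
  let ?P = "pmat n m S 1" and ?Q = "pmat n m S (-1)" and ?Z = "tup_dsum d n m X Y"
  have ds: "\<And>a b. a < n+m \<Longrightarrow> b < n+m \<Longrightarrow> f (n+m) ?Z a b = dsum n m (f n X) (f m Y) a b"
    using ncf X Y unfolding nc_function_def by blast
  have Pc: "pmat n m S s \<in> mat_carrier (n+m)" for s by (auto simp: mat_carrier_def pmat_def)
  have cj: "\<And>a b. a < n+m \<Longrightarrow> b < n+m \<Longrightarrow> f (n+m) (tup_conj d (n+m) ?P ?Z ?Q) a b = vconj scale (n+m) ?P (f (n+m) ?Z) ?Q a b"
    apply (rule ncf[unfolded nc_function_def, THEN conjunct2, rule_format])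
    using tup_dsum_carrier Pc pmat_inv[where s=1] pmat_inv[where s="-1", simplified]
    by auto
  have "f (n+m) ?Z j (n+l) = vconj scale (n+m) ?P (f (n+m) ?Z) ?Q j (n+l)"
    using cj[of j "n+l"] jl by (simp add: conj_fix[OF X Y HI])
  then have "0 = vconj scale (n+m) ?P (f (n+m) ?Z) ?Q j (n+l)"
    using ds[of j "n+l"] jl by (simp add: dsum_lr)
  also have "\<dots> = - (\<Sum>a<n. scale (S a l) (f n X j a)) + (\<Sum>b<m. scale (S j b) (f m Y b l))"
    unfolding vconj_def using jl
    by (simp add: ds sum_split pmat_ll pmat_lr pmat_rl pmat_rr dsum_ll dsum_lr dsum_rl dsum_rr ite1 scale_if sum_negf sum_if_cond)
  finally show ?thesis by (simp add: algebra_simps)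
qed

end




lemma finite_monomials: "finite V \<Longrightarrow> finite (monomials V D)"
proof -
  assume V: "finite V"
  have "monomials V D \<subseteq> {f. \<forall>x. (x \<in> V \<longrightarrow> f x \<in> {..D}) \<and> (x \<notin> V \<longrightarrow> f x = 0)}"
  proof
    fix \<alpha> assume a: "\<alpha> \<in> monomials V D"
    have "\<alpha> x \<le> D" if "x \<in> V" for x
      using a V that member_le_sum[of x V \<alpha>] by (auto simp: monomials_def)
    then show "\<alpha> \<in> {f. \<forall>x. (x \<in> V \<longrightarrow> f x \<in> {..D}) \<and> (x \<notin> V \<longrightarrow> f x = 0)}"
      using a by (auto simp: monomials_def)
  qed
  then show ?thesis by (rule finite_subset) (intro finite_set_of_finite_funs V finite_atMost)
qed

lemma monomial_deg_le:
  assumes "\<alpha> \<in> monomials V D" "\<And>v. e v \<le> (1::nat)" "finite V"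
  shows "(\<Sum>v\<in>V. e v * \<alpha> v) \<le> D"
proof -
  have "(\<Sum>v\<in>V. e v * \<alpha> v) \<le> (\<Sum>v\<in>V. \<alpha> v)"
    by (intro sum_mono) (use assms(2) in \<open>metis mult_le_mono1 mult_1\<close>)
  then show ?thesis using assms(1) by (auto simp: monomials_def)
qed

context vector_space begin

lemma poly_expand:
  assumes fin: "finite V" and x: "\<And>v. v\<in>V \<Longrightarrow> x v = t^(e v) * z v" and e1: "\<And>v. e v \<le> 1"
  shows "(\<Sum>\<alpha>\<in>monomials V D. scale (\<Prod>v\<in>V. x v^(\<alpha> v)) (c \<alpha>)) =
     (\<Sum>j\<le>D. scale (t^j) (\<Sum>\<alpha>\<in>{\<alpha>\<in>monomials V D. (\<Sum>v\<in>V. e v * \<alpha> v) = j}. scale (\<Prod>v\<in>V. z v^(\<alpha> v)) (c \<alpha>)))"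
proof -
  have "(\<Prod>v\<in>V. x v^(\<alpha> v)) = t^(\<Sum>v\<in>V. e v * \<alpha> v) * (\<Prod>v\<in>V. z v^(\<alpha> v))" for \<alpha>
    by (simp add: x power_mult_distrib prod.distrib power_sum power_mult)
  then have "(\<Sum>\<alpha>\<in>monomials V D. scale (\<Prod>v\<in>V. x v^(\<alpha> v)) (c \<alpha>)) =
     (\<Sum>\<alpha>\<in>monomials V D. scale (t^(\<Sum>v\<in>V. e v * \<alpha> v)) (scale (\<Prod>v\<in>V. z v^(\<alpha> v)) (c \<alpha>)))"
    by simp
  also have "\<dots> = (\<Sum>j\<le>D. \<Sum>\<alpha>\<in>{\<alpha>\<in>monomials V D. (\<Sum>v\<in>V. e v * \<alpha> v) = j}. scale (t^(\<Sum>v\<in>V. e v * \<alpha> v)) (scale (\<Prod>v\<in>V. z v^(\<alpha> v)) (c \<alpha>)))"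
    by (rule sum.group[symmetric]) (use finite_monomials[OF fin] monomial_deg_le[OF _ e1 fin] in auto)
  also have "\<dots> = (\<Sum>j\<le>D. scale (t^j) (\<Sum>\<alpha>\<in>{\<alpha>\<in>monomials V D. (\<Sum>v\<in>V. e v * \<alpha> v) = j}. scale (\<Prod>v\<in>V. z v^(\<alpha> v)) (c \<alpha>)))"
    by (simp add: scale_sum_right del: scale_scale)
  finally show ?thesis .
qed


lemma coeff_zero_gen:
  assumes inf: "infinite (UNIV :: 'a set)"
  shows "finite E \<Longrightarrow> (\<forall>t. t \<notin> E \<longrightarrow> (\<Sum>j\<le>K. scale (t^j) (a j)) = 0) \<Longrightarrow> \<forall>j\<le>K. a j = 0"
proof (induction K arbitrary: a E)
  case 0
  obtain t where "t \<notin> E" using inf 0(1) by (metis ex_new_if_finite)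
  then show ?case using 0 by auto
next
  case (Suc K)
  obtain s where s: "s \<notin> E" using inf Suc(2) by (metis ex_new_if_finite)
  define b where "b i = (\<Sum>j\<in>{Suc i..Suc K}. scale (s^(j - Suc i)) (a j))" for i
  have key: "(\<Sum>i\<le>K. scale (t^i) (b i)) = 0" if t: "t \<notin> insert s E" for t
  proof -
    have "0 = (\<Sum>j\<le>Suc K. scale (t^j) (a j)) - (\<Sum>j\<le>Suc K. scale (s^j) (a j))"
      using Suc.prems t s by auto
    also have "\<dots> = (\<Sum>j\<le>Suc K. scale (t^j - s^j) (a j))"
      by (simp add: sum_subtractf scale_left_diff_distrib)
    also have "\<dots> = (\<Sum>j\<le>Suc K. \<Sum>i<j. scale ((t - s) * (t^i * s^(j - Suc i))) (a j))"
      by (intro sum.cong refl) (simp add: power_diff_sumr2 sum_distrib_left scale_sum_left mult.commute mult.left_commute)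
    also have "\<dots> = scale (t - s) (\<Sum>j\<le>Suc K. \<Sum>i<j. scale (t^i * s^(j - Suc i)) (a j))"
      by (simp only: scale_sum_right scale_scale)
    also have "(\<Sum>j\<le>Suc K. \<Sum>i<j. scale (t^i * s^(j - Suc i)) (a j)) = (\<Sum>i<Suc K. \<Sum>j\<in>{Suc i..Suc K}. scale (t^i * s^(j - Suc i)) (a j))"
      by (rule sum.nested_swap')
    also have "\<dots> = (\<Sum>i\<le>K. scale (t^i) (b i))"
      by (simp only: b_def scale_sum_right scale_scale lessThan_Suc_atMost)
    finally show ?thesis using t by simp
  qed
  have "\<forall>i\<le>K. b i = 0"
    by (rule Suc.IH[of "insert s E"]) (use Suc.prems key in auto)
  then have "b K = 0" by simp
  then have aSK: "a (Suc K) = 0" by (simp add: b_def)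
  have "\<forall>j\<le>K. a j = 0"
    by (rule Suc.IH[of E]) (use Suc.prems aSK in auto)
  then show ?case using aSK le_Suc_eq by auto
qed

end




lemma sum_blocks: "(\<Sum>k<q*n. g k) = (\<Sum>a<q. \<Sum>r<(n::nat). g (a*n+r))"
proof (induction q)
  case (Suc q)
  have "(\<Sum>k<Suc q*n. g k) = (\<Sum>k<q*n + n. g k)" by (simp add: add.commute)
  also have "\<dots> = (\<Sum>k<q*n. g k) + (\<Sum>r<n. g (q*n + r))" by (rule sum_split)
  finally show ?case using Suc by simp
qed simp

lemma blk_div[simp]: "r < n \<Longrightarrow> (a*n + r) div n = (a::nat)"
  and blk_mod[simp]: "r < n \<Longrightarrow> (a*n + r) mod n = (r::nat)"
  by auto

lemma blk_less: "a < q \<Longrightarrow> r < n \<Longrightarrow> a*n + r < q*(n::nat)"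
proof -
  assume "a < q" "r < n"
  then have "a*n + r < (a+1)*n" by simp
  also have "\<dots> \<le> q*n" using \<open>a<q\<close> by (intro mult_le_mono1) simp
  finally show ?thesis .
qed

lemma blk_decomp: "j < q*(n::nat) \<Longrightarrow> j = (j div n)*n + j mod n \<and> j div n < q \<and> j mod n < n"
  by (metis div_mult_mod_eq less_mult_imp_div_less mod_less_divisor mult_0_right neq0_conv not_less0)

definition Bm :: "nat \<Rightarrow> 'k \<Rightarrow> nat \<Rightarrow> nat \<Rightarrow> 'k::comm_ring_1" where
  "Bm L t a b = (if b = Suc a then 1 else 0) + (if a = Suc L \<and> b = Suc L then t else 0)"

definition Zt :: "nat \<Rightarrow> nat \<Rightarrow> nat \<Rightarrow> (nat\<Rightarrow>nat\<Rightarrow>nat\<Rightarrow>'k) \<Rightarrow> 'k \<Rightarrow> nat\<Rightarrow>nat\<Rightarrow>nat\<Rightarrow>'k::comm_ring_1" where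
  "Zt d n L X t i j k = (if i < d \<and> j < (L+2)*n \<and> k < (L+2)*n then Bm L t (j div n) (k div n) * X i (j mod n) (k mod n) else 0)"

lemma Zt_blk: "i < d \<Longrightarrow> a < L+2 \<Longrightarrow> b < L+2 \<Longrightarrow> r < n \<Longrightarrow> s < n \<Longrightarrow>
   Zt d n L X t i (a*n+r) (b*n+s) = Bm L t a b * X i r s"
  using blk_less[of a "L+2" r n] blk_less[of b "L+2" s n] by (simp add: Zt_def)

lemma Zt_carrier: "Zt d n L X t \<in> tup_carrier d ((L+2)*n)"
  by (auto simp: Zt_def tup_carrier_def)

lemma if_mult0: "(if P then x else 0) * (y::'a::semiring_0) = (if P then x * y else 0)" by simp

lemma mult_if0: "(x::'a::semiring_0) * (if P then y else 0) = (if P then x * y else 0)" by simp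

lemma Bm_eig: "a < L+2 \<Longrightarrow> (\<Sum>b<L+2. Bm L t a b * t^b) = t^(Suc a)"
proof -
  assume a: "a < L+2"
  show ?thesis
  proof (cases "a = Suc L")
    case True
    then show ?thesis by (simp add: Bm_def sum.distrib distrib_right if_mult0)
  next
    case False
    then have "Suc a < L + 2" using a by simp
    then show ?thesis using False by (simp add: Bm_def sum.distrib distrib_right if_mult0)
  qed
qed


definition Vt :: "nat \<Rightarrow> nat \<Rightarrow> 'k \<Rightarrow> nat \<Rightarrow> nat \<Rightarrow> 'k::comm_ring_1" where
  "Vt n L t j c = (if j < (L+2)*n \<and> j mod n = c then t^(j div n) else 0)"

lemma Vt_blk: "a < L+2 \<Longrightarrow> s < n \<Longrightarrow> Vt n L t (a*n+s) l = (if s = l then t^a else 0)"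
  using blk_less[of a "L+2" s n] by (simp add: Vt_def)

lemma tX_carrier: "X \<in> tup_carrier d n \<Longrightarrow> (\<lambda>i j k. (t::'k::mult_zero) * X i j k) \<in> tup_carrier d n"
  by (auto simp: tup_carrier_def)

context ncl begin

lemma eig:
  assumes X: "X \<in> tup_carrier d n" and r: "r < n" and c: "c < n"
  shows "f n (\<lambda>i j k. t * X i j k) r c = (\<Sum>a<L+2. scale (t^a) (f ((L+2)*n) (Zt d n L X t) r (a*n + c)))"
proof -
  have HI: "(\<Sum>a<(L+2)*n. Zt d n L X t i j a * Vt n L t a l) = (\<Sum>b<n. Vt n L t j b * (t * X i b l))"
    if i: "i < d" and j: "j < (L+2)*n" and l: "l < n" for i j l
  proof -
    obtain jb jr where jj: "j = jb*n + jr" "jb < L+2" "jr < n" using blk_decomp[OF j] by blast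
    have "(\<Sum>a<(L+2)*n. Zt d n L X t i j a * Vt n L t a l) = (\<Sum>a<L+2. \<Sum>s<n. Bm L t jb a * X i jr s * (if s = l then t^a else 0))"
      unfolding sum_blocks using jj i by (simp add: Zt_blk Vt_blk)
    also have "\<dots> = (\<Sum>a<L+2. Bm L t jb a * t^a) * X i jr l"
      using l by (simp add: sum_distrib_right sum_distrib_left mult_ac mult_if0 del: sum.lessThan_Suc)
    also have "\<dots> = t^(Suc jb) * X i jr l" by (simp only: Bm_eig[OF jj(2)])
    also have "\<dots> = (\<Sum>b<n. Vt n L t j b * (t * X i b l))"
      unfolding jj(1) using jj(2,3) by (simp add: Vt_blk if_mult0 mult_if0 mult_ac)
    finally show ?thesis .
  qed
  have rr: "r < (L+2)*n" using blk_less[of 0 "L+2" r n] r by simp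
  have "(\<Sum>a<(L+2)*n. scale (Vt n L t a c) (f ((L+2)*n) (Zt d n L X t) r a)) =
        (\<Sum>b<n. scale (Vt n L t r b) (f n (\<lambda>i j k. t * X i j k) b c))"
    by (rule intertw[OF Zt_carrier tX_carrier[OF X] HI rr c])
  moreover have "(\<Sum>b<n. scale (Vt n L t r b) (f n (\<lambda>i j k. t * X i j k) b c)) = f n (\<lambda>i j k. t * X i j k) r c"
    using rr r by (simp add: Vt_def scale_if)
  moreover have "(\<Sum>a<(L+2)*n. scale (Vt n L t a c) (f ((L+2)*n) (Zt d n L X t) r a)) =
      (\<Sum>a<L+2. scale (t^a) (f ((L+2)*n) (Zt d n L X t) r (a*n + c)))"
    unfolding sum_blocks using c by (simp add: Vt_blk scale_if)
  ultimately show ?thesis by simp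
qed

end




lemma finite_words: "finite (words d L)"
proof -
  have "words d L = {xs. set xs \<subseteq> {..<d} \<and> length xs \<le> L}" by (auto simp: words_def)
  then show ?thesis using finite_lists_length_le[of "{..<d}" L] by simp
qed

lemma word_mat_Cons: "word_mat n X (i # w) = mmul n (X i) (word_mat n X w)"
  by (simp add: word_mat_def)

lemma word_mat_Nil: "word_mat n X [] = idm n"
  by (simp add: word_mat_def)

definition Uf :: "nat \<Rightarrow> nat \<Rightarrow> (nat \<Rightarrow> nat list) \<Rightarrow> nat \<Rightarrow> nat \<Rightarrow> nat \<Rightarrow> nat \<Rightarrow> 'k::comm_ring_1" where
  "Uf d L h N i a b = (if i < d \<and> a < N \<and> b < N \<and> length (h b) < L \<and> h a = i # h b then 1 else 0)"

definition Rf :: "nat \<Rightarrow> nat \<Rightarrow> (nat\<Rightarrow>nat\<Rightarrow>nat\<Rightarrow>'k) \<Rightarrow> (nat \<Rightarrow> nat list) \<Rightarrow> nat \<Rightarrow> nat \<Rightarrow> nat \<Rightarrow> nat \<Rightarrow> nat \<Rightarrow> 'k::comm_ring_1" where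
  "Rf n L X h N k0 c a b = (if a < (L+2)*n \<and> b < N \<and> length (h b) \<le> k0 \<and> a div n = k0 - length (h b)
      then word_mat n X (h b) (a mod n) c else 0)"

lemma Uf_carrier: "Uf d L h N \<in> tup_carrier d N"
  by (auto simp: Uf_def tup_carrier_def)

lemma Rf_blk: "a < L+2 \<Longrightarrow> s < n \<Longrightarrow> b < N \<Longrightarrow> Rf n L X h N k0 c (a*n+s) b =
   (if length (h b) \<le> k0 \<and> a = k0 - length (h b) then word_mat n X (h b) s c else 0)"
  using blk_less[of a "L+2" s n] by (simp add: Rf_def)

lemma Bm_low: "b \<le> L \<Longrightarrow> Bm L t a b = (if b = Suc a then 1 else 0)"
  by (simp add: Bm_def)

lemma fock_HI:
  assumes h: "bij_betw h {..<N} (words d L)" and k0: "k0 \<le> L"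
    and i: "i < d" and j: "j < (L+2)*n" and l: "l < N"
  shows "(\<Sum>a<(L+2)*n. Zt d n L X t i j a * Rf n L X h N k0 c a l) = (\<Sum>b<N. Rf n L X h N k0 c j b * Uf d L h N i b l)"
proof -
  obtain jb jr where jj: "j = jb*n + jr" "jb < L+2" "jr < n" using blk_decomp[OF j] by blast
  let ?w = "h l"
  have hl: "?w \<in> words d L" using h l by (auto simp: bij_betw_def)
  have "(\<Sum>a<(L+2)*n. Zt d n L X t i j a * Rf n L X h N k0 c a l)
      = (\<Sum>a<L+2. \<Sum>s<n. Bm L t jb a * X i jr s * (if length ?w \<le> k0 \<and> a = k0 - length ?w then word_mat n X ?w s c else 0))"
    unfolding sum_blocks using jj i l by (simp add: Zt_blk Rf_blk)
  also have "\<dots> = (\<Sum>a<L+2. if length ?w \<le> k0 \<and> a = k0 - length ?w then Bm L t jb a * (\<Sum>s<n. X i jr s * word_mat n X ?w s c) else 0)"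
    by (intro sum.cong refl) (auto simp: sum_distrib_left mult_ac)
  also have "\<dots> = (if length ?w \<le> k0 then Bm L t jb (k0 - length ?w) * word_mat n X (i # ?w) jr c else 0)"
    using k0 by (simp add: word_mat_Cons mmul_def)
  also have "\<dots> = (if length ?w \<le> k0 \<and> k0 - length ?w = Suc jb then word_mat n X (i # ?w) jr c else 0)"
    using k0 by (simp add: Bm_low)
  finally have LHS: "(\<Sum>a<(L+2)*n. Zt d n L X t i j a * Rf n L X h N k0 c a l) =
    (if length ?w \<le> k0 \<and> k0 - length ?w = Suc jb then word_mat n X (i # ?w) jr c else 0)" .
  show ?thesis
  proof (cases "length ?w < L")
    case False
    then have "(\<Sum>b<N. Rf n L X h N k0 c j b * Uf d L h N i b l) = 0" by (simp add: Uf_def)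
    then show ?thesis using LHS False k0 by auto
  next
    case True
    have iw: "i # ?w \<in> words d L" using hl True i by (auto simp: words_def)
    define b0 where "b0 = inv_into {..<N} h (i # ?w)"
    have b0: "b0 < N" "h b0 = i # ?w"
      using iw h unfolding b0_def
      by (auto intro: inv_into_into[of _ h "{..<N}", simplified] bij_betw_inv_into_right simp: bij_betw_def)
    have uniq: "b < N \<Longrightarrow> h b = i # ?w \<longleftrightarrow> b = b0" for b
      using b0 h by (auto simp: bij_betw_def inj_on_def)
    have "(\<Sum>b<N. Rf n L X h N k0 c j b * Uf d L h N i b l) = (\<Sum>b<N. if b = b0 then Rf n L X h N k0 c j b else 0)"
      by (intro sum.cong refl) (use uniq True i l in \<open>auto simp: Uf_def\<close>)
    also have "\<dots> = Rf n L X h N k0 c j b0" using b0 by simp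
    also have "\<dots> = (if Suc (length ?w) \<le> k0 \<and> jb = k0 - Suc (length ?w) then word_mat n X (i # ?w) jr c else 0)"
      unfolding jj(1) using jj(2,3) b0 by (simp add: Rf_blk)
    finally show ?thesis using LHS by auto
  qed
qed


context ncl begin

lemma fock:
  assumes X: "X \<in> tup_carrier d n" and h: "bij_betw h {..<N} (words d L)" and k0: "k0 \<le> L"
    and r: "r < n" and c: "c < n"
  shows "f ((L+2)*n) (Zt d n L X t) r (k0*n + c) =
    (\<Sum>w\<in>words d L. if length w = k0 then scale (word_mat n X w r c) (f N (Uf d L h N) (inv_into {..<N} h w) (inv_into {..<N} h [])) else 0)"
proof -
  define l0 where "l0 = inv_into {..<N} h []"
  have nil: "[] \<in> words d L" by (simp add: words_def)
  have l0: "l0 < N" "h l0 = []"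
    using nil h unfolding l0_def
    by (auto intro: inv_into_into[of _ h "{..<N}", simplified] bij_betw_inv_into_right simp: bij_betw_def)
  have rr: "r < (L+2)*n" using blk_less[of 0 "L+2" r n] r by simp
  have I: "(\<Sum>a<(L+2)*n. scale (Rf n L X h N k0 c a l0) (f ((L+2)*n) (Zt d n L X t) r a)) =
        (\<Sum>b<N. scale (Rf n L X h N k0 c r b) (f N (Uf d L h N) b l0))"
    by (rule intertw[OF Zt_carrier Uf_carrier fock_HI[OF h k0] rr l0(1)])
  have "(\<Sum>a<(L+2)*n. scale (Rf n L X h N k0 c a l0) (f ((L+2)*n) (Zt d n L X t) r a)) = f ((L+2)*n) (Zt d n L X t) r (k0*n + c)"
    unfolding sum_blocks using l0 c k0 by (simp add: Rf_blk word_mat_Nil idm_def scale_if sum_if_cond)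
  moreover have "(\<Sum>b<N. scale (Rf n L X h N k0 c r b) (f N (Uf d L h N) b l0)) =
      (\<Sum>b<N. (\<lambda>w. if length w = k0 then scale (word_mat n X w r c) (f N (Uf d L h N) (inv_into {..<N} h w) l0) else 0) (h b))"
  proof (intro sum.cong refl)
    fix b assume b: "b \<in> {..<N}"
    have "inv_into {..<N} h (h b) = b" using b h by (simp add: bij_betw_def inv_into_f_f)
    moreover have "Rf n L X h N k0 c r b = (if length (h b) = k0 then word_mat n X (h b) r c else 0)"
      using Rf_blk[of 0 L r n b N X h k0 c] r b by auto
    ultimately show "scale (Rf n L X h N k0 c r b) (f N (Uf d L h N) b l0) =
      (\<lambda>w. if length w = k0 then scale (word_mat n X w r c) (f N (Uf d L h N) (inv_into {..<N} h w) l0) else 0) (h b)"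
      by simp
  qed
  moreover have "\<dots> = (\<Sum>w\<in>words d L. if length w = k0 then scale (word_mat n X w r c) (f N (Uf d L h N) (inv_into {..<N} h w) l0) else 0)"
    by (rule sum.reindex_bij_betw[OF h])
  ultimately have "f ((L+2)*n) (Zt d n L X t) r (k0*n + c) =
    (\<Sum>w\<in>words d L. if length w = k0 then scale (word_mat n X w r c) (f N (Uf d L h N) (inv_into {..<N} h w) l0) else 0)"
    using I by simp
  then show ?thesis unfolding l0_def .
qed

end




lemma prod_case3: "(\<Prod>(i,j,k)\<in>V. Y i j k ^ \<alpha>(i,j,k)) = (\<Prod>v\<in>V. (case v of (i,j,k) \<Rightarrow> Y i j k) ^ \<alpha> v)"
  by (rule prod.cong) (auto split: prod.split)

definition ee :: "nat \<Rightarrow> nat \<Rightarrow> nat \<times> nat \<times> nat \<Rightarrow> nat" where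
  "ee n L v = (case v of (i,j,k) \<Rightarrow> if j div n = Suc L \<and> k div n = Suc L then 1 else 0)"

lemma Zt_scal: "Zt d n L X t i j k = t^(ee n L (i,j,k)) * Zt d n L X 1 i j k"
  by (simp add: Zt_def ee_def Bm_def)

lemma ee_le: "ee n L v \<le> 1"
  by (simp add: ee_def split: prod.split)

lemma finite_vars: "finite (vars d n)"
proof -
  have "vars d n \<subseteq> {..<d} \<times> {..<n} \<times> {..<n}" by (auto simp: vars_def)
  then show ?thesis by (rule finite_subset) auto
qed

theorem theorem6p1:
  fixes scale :: "'k::field \<Rightarrow> 'v::ab_group_add \<Rightarrow> 'v"
    and d :: nat
    and f :: "nat \<Rightarrow> (nat \<Rightarrow> nat \<Rightarrow> nat \<Rightarrow> 'k) \<Rightarrow> nat \<Rightarrow> nat \<Rightarrow> 'v"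
  assumes "infinite (UNIV :: 'k set)"
    and "vector_space scale"
    and "nc_function scale d f"
    and "\<exists>D. \<forall>n j k. j < n \<longrightarrow> k < n \<longrightarrow> poly_fun_deg scale d n D (\<lambda>X. f n X j k)"
  shows "\<exists>L (p :: nat list \<Rightarrow> 'v). \<forall>n. \<forall>X \<in> tup_carrier d n. \<forall>j k. j < n \<longrightarrow> k < n \<longrightarrow>
           f n X j k = (\<Sum>w\<in>words d L. scale (word_mat n X w j k) (p w))"
proof -
  interpret V: vector_space scale by (rule assms(2))
  interpret N: ncl scale d f
    by (rule ncl.intro) (use assms(2,3) module_iff_vector_space in \<open>auto simp: ncl_axioms_def\<close>)
  obtain D where poly: "\<And>n j k. j < n \<Longrightarrow> k < n \<Longrightarrow> poly_fun_deg scale d n D (\<lambda>X. f n X j k)"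
    using assms(4) by blast
  let ?W = "words d D"
  define N where "N = card ?W"
  obtain h where h: "bij_betw h {..<N} ?W"
    using ex_bij_betw_nat_finite[OF finite_words[of d D]] unfolding N_def atLeast0LessThan by blast
  define p where "p w = f N (Uf d D h N) (inv_into {..<N} h w) (inv_into {..<N} h [])" for w
  have main: "f n X r c = (\<Sum>w\<in>?W. scale (word_mat n X w r c) (p w))"
    if X: "X \<in> tup_carrier d n" and r: "r < n" and c: "c < n" for n X r c
  proof -
    define Bk where "Bk j = (\<Sum>w\<in>?W. if length w = j then scale (word_mat n X w r c) (p w) else 0)" for j
    let ?M = "(D+2)*n"
    define G where "G t = f ?M (Zt d n D X t) r (Suc D * n + c)" for t
    have E: "f n (\<lambda>i j k. t * X i j k) r c = (\<Sum>a\<le>D. scale (t^a) (Bk a)) + scale (t^Suc D) (G t)" for t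
    proof -
      have "f n (\<lambda>i j k. t * X i j k) r c = (\<Sum>a<Suc (Suc D). scale (t^a) (f ?M (Zt d n D X t) r (a*n + c)))"
        using N.eig[OF X r c, of t D] by simp
      also have "\<dots> = (\<Sum>a\<le>D. scale (t^a) (f ?M (Zt d n D X t) r (a*n + c))) + scale (t^Suc D) (G t)"
        by (subst sum.lessThan_Suc) (simp only: G_def lessThan_Suc_atMost)
      also have "(\<Sum>a\<le>D. scale (t^a) (f ?M (Zt d n D X t) r (a*n + c))) = (\<Sum>a\<le>D. scale (t^a) (Bk a))"
      proof (intro sum.cong refl)
        fix a assume "a \<in> {..D}"
        then have "f ?M (Zt d n D X t) r (a*n + c) = Bk a"
          unfolding Bk_def p_def using N.fock[OF X h _ r c, of a t] by simp
        then show "scale (t^a) (f ?M (Zt d n D X t) r (a*n + c)) = scale (t^a) (Bk a)" by simp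
      qed
      finally show ?thesis .
    qed
    obtain c1 where c1: "\<And>Y. Y \<in> tup_carrier d n \<Longrightarrow> f n Y r c =
        (\<Sum>\<alpha>\<in>monomials (vars d n) D. scale (\<Prod>(i,j,k)\<in>vars d n. Y i j k ^ \<alpha>(i,j,k)) (c1 \<alpha>))"
      using poly[OF r c] unfolding poly_fun_deg_def by blast
    define A where "A j = (\<Sum>\<alpha>\<in>{\<alpha>\<in>monomials (vars d n) D. (\<Sum>v\<in>vars d n. 1 * \<alpha> v) = j}.
        scale (\<Prod>v\<in>vars d n. (case v of (i,j,k) \<Rightarrow> X i j k) ^ \<alpha> v) (c1 \<alpha>))" for j
    have P1: "f n (\<lambda>i j k. t * X i j k) r c = (\<Sum>j\<le>D. scale (t^j) (A j))" for t
    proof -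
      have "f n (\<lambda>i j k. t * X i j k) r c =
        (\<Sum>\<alpha>\<in>monomials (vars d n) D. scale (\<Prod>v\<in>vars d n. (case v of (i,j,k) \<Rightarrow> t * X i j k) ^ \<alpha> v) (c1 \<alpha>))"
        using c1[OF tX_carrier[OF X, of t]]
        by (simp, intro sum.cong refl arg_cong2[where f=scale] prod.cong) (auto split: prod.split)
      also have "\<dots> = (\<Sum>j\<le>D. scale (t^j) (A j))"
        unfolding A_def
        by (rule V.poly_expand[OF finite_vars, where e="\<lambda>_. 1"]) (auto split: prod.split)
      finally show ?thesis .
    qed
    have rM: "r < ?M" using blk_less[of 0 "D+2" r n] r by simp
    have cM: "Suc D * n + c < ?M" using blk_less[of "Suc D" "D+2" c n] c by simp
    obtain c2 where c2: "\<And>Y. Y \<in> tup_carrier d ?M \<Longrightarrow> f ?M Y r (Suc D * n + c) =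
        (\<Sum>\<alpha>\<in>monomials (vars d ?M) D. scale (\<Prod>(i,j,k)\<in>vars d ?M. Y i j k ^ \<alpha>(i,j,k)) (c2 \<alpha>))"
      using poly[OF rM cM] unfolding poly_fun_deg_def by blast
    define C where "C j = (\<Sum>\<alpha>\<in>{\<alpha>\<in>monomials (vars d ?M) D. (\<Sum>v\<in>vars d ?M. ee n D v * \<alpha> v) = j}.
        scale (\<Prod>v\<in>vars d ?M. (case v of (i,j,k) \<Rightarrow> Zt d n D X 1 i j k) ^ \<alpha> v) (c2 \<alpha>))" for j
    have P2: "G t = (\<Sum>j\<le>D. scale (t^j) (C j))" for t
    proof -
      have "G t =
        (\<Sum>\<alpha>\<in>monomials (vars d ?M) D. scale (\<Prod>v\<in>vars d ?M. (case v of (i,j,k) \<Rightarrow> Zt d n D X t i j k) ^ \<alpha> v) (c2 \<alpha>))"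
        unfolding G_def using c2[OF Zt_carrier]
        by (simp, intro sum.cong refl arg_cong2[where f=scale] prod.cong) (auto split: prod.split)
      also have "\<dots> = (\<Sum>j\<le>D. scale (t^j) (C j))"
        unfolding C_def
        by (rule V.poly_expand[OF finite_vars, where e="ee n D"]) (auto split: prod.split intro: Zt_scal ee_le[unfolded One_nat_def])
      finally show ?thesis .
    qed
    have ID: "(\<Sum>j\<le>D. scale (t^j) (A j)) = (\<Sum>a\<le>D. scale (t^a) (Bk a)) + scale (t^Suc D) (\<Sum>j\<le>D. scale (t^j) (C j))" for t
      using P1[of t] E[of t] P2[of t] by simp
    define coef where "coef j = (if j \<le> D then A j - Bk j else - C (j - Suc D))" for j
    have Z: "(\<Sum>j\<le>D + Suc D. scale (t^j) (coef j)) = 0" for t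
    proof -
      have "(\<Sum>j\<le>D + Suc D. scale (t^j) (coef j)) = (\<Sum>j<Suc D + Suc D. scale (t^j) (coef j))"
        by (simp add: lessThan_Suc_atMost[symmetric] del: sum.lessThan_Suc)
      also have "\<dots> = (\<Sum>j<Suc D. scale (t^j) (coef j)) + (\<Sum>b<Suc D. scale (t^(Suc D + b)) (coef (Suc D + b)))"
        by (rule sum_split)
      also have "(\<Sum>j<Suc D. scale (t^j) (coef j)) = (\<Sum>j\<le>D. scale (t^j) (A j)) - (\<Sum>a\<le>D. scale (t^a) (Bk a))"
        by (simp add: lessThan_Suc_atMost coef_def V.scale_right_diff_distrib sum_subtractf del: sum.lessThan_Suc)
      also have "(\<Sum>b<Suc D. scale (t^(Suc D + b)) (coef (Suc D + b))) = - scale (t^Suc D) (\<Sum>j\<le>D. scale (t^j) (C j))"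
        by (simp add: lessThan_Suc_atMost coef_def V.scale_sum_right power_add sum_negf mult.assoc del: sum.lessThan_Suc)
      finally show ?thesis using ID[of t] by simp
    qed
    have "\<forall>j\<le>D + Suc D. coef j = 0"
      by (rule V.coeff_zero_gen[OF assms(1), of "{}"]) (use Z in auto)
    then have AB: "A j = Bk j" if "j \<le> D" for j
    proof -
      have "coef j = 0" using that \<open>\<forall>j\<le>D + Suc D. coef j = 0\<close> by simp
      then show ?thesis using that by (simp add: coef_def)
    qed
    have "f n X r c = f n (\<lambda>i j k. 1 * X i j k) r c" by simp
    also have "\<dots> = (\<Sum>j\<le>D. Bk j)" using P1[of 1] AB by simp
    also have "\<dots> = (\<Sum>w\<in>?W. \<Sum>j\<le>D. if length w = j then scale (word_mat n X w r c) (p w) else 0)"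
      unfolding Bk_def by (rule sum.swap)
    also have "\<dots> = (\<Sum>w\<in>?W. scale (word_mat n X w r c) (p w))"
      by (intro sum.cong refl) (auto simp: words_def)
    finally show ?thesis .
  qed
  show ?thesis using main by blast
qed



end
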